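(* Let $\alpha>0$, $\gamma>0$, $\beta_2\in\mathbb{R}\setminus\{0\}$ and $\kappa,\chi\in\mathbb{R}\setminus\{0\}$, and set $K=-\frac{2\gamma\kappa}{\chi\beta_2}$, assumed to satisfy $K>0$. Define $$T(z,t)=Ke^{-\alpha z}t,\qquad Z(z)=\frac{K\gamma}{2\alpha\chi}\left(e^{-2\alpha z}-1\right).$$ Let $Q(Z,T)$ be a solution of the standard NLSE $$iQ_Z+\kappa Q_{TT}+\chi|Q|^2Q=0 .$$ Then $$v(z,t)=\sqrt{K}\exp\Big[i\frac{\alpha}{2\beta_2}t^2-\frac{\alpha}{2}z\Big]\,Q(Z(z),T(z,t))$$ is a solution of $$iv_z+\frac{\beta_2}{2}v_{tt}-\gamma e^{-\alpha z}|v|^2v+\frac{\alpha^2}{2\beta_2}t^2v=0 .$$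
   Context: All functions are complex-valued functions of real variables; solutions are understood classically (sufficiently differentiable). *)

theory Defs
  imports "HOL-Analysis.Analysis"
begin

end

theory Submission
  imports Defs
begin

lemma alg:
  fixes s E q qz qt qtt :: complex and \<alpha> \<beta>2 \<gamma> chi K e t n T0 :: real
  assumes "\<beta>2 \<noteq> 0" "chi \<noteq> 0" "T0 = K * e * t"
  shows "\<i> * (s*(E*q*complex_of_real(-\<alpha>/2) + E*(complex_of_real(-K*\<gamma>/chi*e\<^sup>2)*qz + complex_of_real(-\<alpha>*T0)*qt)))
 + complex_of_real(\<beta>2/2) * (s*( E*(\<i>*complex_of_real(2*(\<alpha>/(2*\<beta>2))*t))*q*(\<i>*complex_of_real(2*(\<alpha>/(2*\<beta>2))*t)) + E*(complex_of_real(K*e)*qt)*(\<i>*complex_of_real(2*(\<alpha>/(2*\<beta>2))*t)) + E*q*(\<i>*complex_of_real(2*(\<alpha>/(2*\<beta>2)))) + E*(\<i>*complex_of_real(2*(\<alpha>/(2*\<beta>2))*t))*(complex_of_real(K*e)*qt) + E*(complex_of_real(K*e)*(complex_of_real(K*e)*qtt))))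
 - complex_of_real(\<gamma>*e*(K*e*n)) * (s*E*q) + complex_of_real(\<alpha>\<^sup>2/(2*\<beta>2)*t\<^sup>2)*(s*E*q)
 = s*E*(complex_of_real(K*e\<^sup>2)*(\<i>*complex_of_real(-\<gamma>/chi)*qz + complex_of_real(\<beta>2*K/2)*qtt - complex_of_real(\<gamma>*n)*q))"
  using assms
  by (simp add: field_simps power2_eq_square)

theorem theorem3p3p1:
  fixes \<alpha> \<gamma> \<beta>2 \<kappa> chi K :: real
    and Q QZ QT QTT :: "real \<Rightarrow> real \<Rightarrow> complex"
    and Tf :: "real \<Rightarrow> real \<Rightarrow> real" and Zf :: "real \<Rightarrow> real"
    and v :: "real \<Rightarrow> real \<Rightarrow> complex"
  assumes "\<alpha> > 0" and "\<gamma> > 0" and "\<beta>2 \<noteq> 0" and "\<kappa> \<noteq> 0" and "chi \<noteq> 0"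
    and K_def: "K = - (2 * \<gamma> * \<kappa>) / (chi * \<beta>2)" and "K > 0"
    and T_def: "Tf = (\<lambda>z t. K * exp (- \<alpha> * z) * t)"
    and Z_def: "Zf = (\<lambda>z. K * \<gamma> / (2 * \<alpha> * chi) * (exp (- 2 * \<alpha> * z) - 1))"
    and Q_diff: "\<And>Z T. ((\<lambda>p. Q (fst p) (snd p)) has_derivative
                     (\<lambda>h. fst h *\<^sub>R QZ Z T + snd h *\<^sub>R QT Z T)) (at (Z, T))"
    and Q_TT: "\<And>Z T. ((\<lambda>s. QT Z s) has_vector_derivative QTT Z T) (at T)"
    and Q_eq: "\<And>Z T. \<i> * QZ Z T + complex_of_real \<kappa> * QTT Z T
                     + complex_of_real (chi * (cmod (Q Z T))\<^sup>2) * Q Z T = 0"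
    and v_def: "v = (\<lambda>z t. complex_of_real (sqrt K)
                     * exp (\<i> * complex_of_real (\<alpha> / (2 * \<beta>2) * t\<^sup>2) - complex_of_real (\<alpha> / 2 * z))
                     * Q (Zf z) (Tf z t))"
  shows "\<forall>z t.
           (\<lambda>s. v s t) differentiable (at z)
         \<and> (\<forall>s. (\<lambda>r. v z r) differentiable (at s))
         \<and> (\<lambda>s. vector_derivative (\<lambda>r. v z r) (at s)) differentiable (at t)
         \<and> \<i> * vector_derivative (\<lambda>s. v s t) (at z)
             + complex_of_real (\<beta>2 / 2)
                 * vector_derivative (\<lambda>s. vector_derivative (\<lambda>r. v z r) (at s)) (at t)
             - complex_of_real (\<gamma> * exp (- \<alpha> * z) * (cmod (v z t))\<^sup>2) * v z t
             + complex_of_real (\<alpha>\<^sup>2 / (2 * \<beta>2) * t\<^sup>2) * v z t = 0"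
proof (intro allI)
  fix z t
  have QC: "\<And>(g::real \<Rightarrow> real \<times> real) (a::real) (b::real) x. (g has_vector_derivative (a,b)) (at x) \<Longrightarrow>
     ((\<lambda>s. Q (fst (g s)) (snd (g s))) has_vector_derivative
        (a *\<^sub>R QZ (fst (g x)) (snd (g x)) + b *\<^sub>R QT (fst (g x)) (snd (g x)))) (at x)"
  proof -
    fix g :: "real \<Rightarrow> real \<times> real" and a b :: real and x :: real
    assume g: "(g has_vector_derivative (a,b)) (at x)"
    have "((\<lambda>p. Q (fst p) (snd p)) \<circ> g has_derivative
       (\<lambda>h. fst h *\<^sub>R QZ (fst (g x)) (snd (g x)) + snd h *\<^sub>R QT (fst (g x)) (snd (g x))) \<circ> (\<lambda>h. h *\<^sub>R (a,b))) (at x)"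
      apply (rule diff_chain_at)
      using g apply (simp add: has_vector_derivative_def)
      using Q_diff[of "fst (g x)" "snd (g x)"] by simp
    then show "?thesis g a b x"
      by (simp add: has_vector_derivative_def o_def scaleR_add_right)
  qed
  define c where "c = \<alpha> / (2 * \<beta>2)"
  define E where "E = (\<lambda>s r. exp (\<i> * complex_of_real (c * r\<^sup>2) - complex_of_real (\<alpha> / 2 * s)))"
  have v_E: "\<And>s r. v s r = complex_of_real (sqrt K) * E s r * Q (Zf s) (Tf s r)"
    by (simp add: v_def E_def c_def)
  have Ez: "((\<lambda>s. E s t) has_vector_derivative (E z t * complex_of_real (- \<alpha> / 2))) (at z)"
  proof -
    have "((\<lambda>s. \<i> * complex_of_real (c * t\<^sup>2) - complex_of_real (\<alpha> / 2 * s)) has_vector_derivative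
        complex_of_real (- \<alpha> / 2)) (at z)"
      by (auto intro!: derivative_eq_intros)
    from field_vector_diff_chain_at[OF this DERIV_exp]
    show ?thesis by (simp add: E_def o_def mult.commute)
  qed
  have Et: "\<And>r. ((\<lambda>r. E z r) has_vector_derivative (E z r * (\<i> * complex_of_real (2 * c * r)))) (at r)"
  proof -
    fix r
    have "((\<lambda>r. \<i> * complex_of_real (c * r\<^sup>2) - complex_of_real (\<alpha> / 2 * z)) has_vector_derivative
        (\<i> * complex_of_real (2 * c * r))) (at r)"
    proof -
      have "((\<lambda>r. complex_of_real (c * r\<^sup>2)) has_vector_derivative complex_of_real (2 * c * r)) (at r)"
        by (rule has_vector_derivative_of_real) (auto intro!: derivative_eq_intros)
      then have "((\<lambda>r. \<i> * complex_of_real (c * r\<^sup>2)) has_vector_derivative \<i> * complex_of_real (2 * c * r)) (at r)"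
        by (rule has_vector_derivative_mult_right)
      then show ?thesis by (simp only: has_vector_derivative_diff_const)
    qed
    from field_vector_diff_chain_at[OF this DERIV_exp]
    show "?thesis r" by (simp add: E_def o_def mult.commute)
  qed
  define e where "e = exp (- \<alpha> * z)"
  define A where "A = K * e"
  define Zd where "Zd = - K * \<gamma> / chi * e\<^sup>2"
  define T0 where "T0 = Tf z t"
  have e2: "exp (- 2 * \<alpha> * z) = e\<^sup>2"
    by (simp add: e_def power2_eq_square flip: exp_add)
  have gz: "((\<lambda>s. (Zf s, Tf s t)) has_vector_derivative (Zd, - \<alpha> * T0)) (at z)"
  proof -
    have "(Zf has_real_derivative (K * \<gamma> / (2 * \<alpha> * chi) * (exp (- 2 * \<alpha> * z) * (- 2 * \<alpha>)))) (at z)"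
      unfolding Z_def using \<open>chi \<noteq> 0\<close> by (auto intro!: derivative_eq_intros)
    then have "(Zf has_real_derivative Zd) (at z)"
      unfolding Zd_def e2 using \<open>\<alpha> > 0\<close> \<open>chi \<noteq> 0\<close> by (simp add: field_simps)
    moreover have "((\<lambda>s. Tf s t) has_real_derivative (- \<alpha> * T0)) (at z)"
      unfolding T_def T0_def
      by (auto intro!: derivative_eq_intros)
    ultimately show ?thesis
      by (simp add: has_real_derivative_iff_has_vector_derivative has_vector_derivative_def has_derivative_Pair)
  qed
  have gt: "\<And>r. ((\<lambda>r. (Zf z, Tf z r)) has_vector_derivative (0, A)) (at r)"
  proof -
    fix r
    have "((\<lambda>r. Tf z r) has_real_derivative A) (at r)"
      unfolding T_def A_def e_def by (auto intro!: derivative_eq_intros)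
    then show "?thesis r"
      by (simp add: has_real_derivative_iff_has_vector_derivative has_vector_derivative_def has_derivative_Pair
          has_derivative_const)
  qed
  define Dz where "Dz = complex_of_real (sqrt K) * (E z t * Q (Zf z) T0 * complex_of_real (- \<alpha> / 2) +
        E z t * (Zd *\<^sub>R QZ (Zf z) T0 + (- \<alpha> * T0) *\<^sub>R QT (Zf z) T0))"
  have Hz: "((\<lambda>s. v s t) has_vector_derivative Dz) (at z)"
  proof -
    have "((\<lambda>s. complex_of_real (sqrt K) * (E s t * Q (Zf s) (Tf s t))) has_vector_derivative Dz) (at z)"
      unfolding Dz_def
      apply (rule has_vector_derivative_mult_right)
      apply (rule has_vector_derivative_eq_rhs)
       apply (rule has_vector_derivative_mult[OF Ez QC[OF gz, simplified]])
      by (simp add: T0_def algebra_simps)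
    then show ?thesis by (simp add: v_E mult.assoc)
  qed
  define Dt where "Dt = (\<lambda>r. complex_of_real (sqrt K) * (E z r * Q (Zf z) (Tf z r) * (\<i> * complex_of_real (2 * c * r))
        + E z r * (A *\<^sub>R QT (Zf z) (Tf z r))))"
  have Ht: "\<And>r. ((\<lambda>r. v z r) has_vector_derivative Dt r) (at r)"
  proof -
    fix r
    have "((\<lambda>r. complex_of_real (sqrt K) * (E z r * Q (Zf z) (Tf z r))) has_vector_derivative Dt r) (at r)"
      unfolding Dt_def
      apply (rule has_vector_derivative_mult_right)
      apply (rule has_vector_derivative_eq_rhs)
       apply (rule has_vector_derivative_mult[OF Et QC[OF gt, simplified]])
      by (simp add: algebra_simps)
    then show "?thesis r" by (simp add: v_E mult.assoc)
  qed
  have VD: "(\<lambda>s. vector_derivative (\<lambda>r. v z r) (at s)) = Dt"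
    using Ht vector_derivative_at by blast
  have QTc: "((\<lambda>r. QT (Zf z) (Tf z r)) has_vector_derivative (A *\<^sub>R QTT (Zf z) T0)) (at t)"
  proof -
    have "((\<lambda>r. Tf z r) has_vector_derivative A) (at t)"
      unfolding T_def A_def e_def has_real_derivative_iff_has_vector_derivative[symmetric]
      by (auto intro!: derivative_eq_intros)
    from vector_diff_chain_at[OF this Q_TT[of "Zf z" "Tf z t"]]
    show ?thesis by (simp add: o_def T0_def)
  qed
  define Dtt where "Dtt = complex_of_real (sqrt K) * (
      (E z t * (\<i> * complex_of_real (2 * c * t))) * Q (Zf z) T0 * (\<i> * complex_of_real (2 * c * t))
      + E z t * (A *\<^sub>R QT (Zf z) T0) * (\<i> * complex_of_real (2 * c * t))
      + E z t * Q (Zf z) T0 * (\<i> * complex_of_real (2 * c))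
      + (E z t * (\<i> * complex_of_real (2 * c * t))) * (A *\<^sub>R QT (Zf z) T0)
      + E z t * (A *\<^sub>R (A *\<^sub>R QTT (Zf z) T0)))"
  have q1: "((\<lambda>r. Q (Zf z) (Tf z r)) has_vector_derivative A *\<^sub>R QT (Zf z) T0) (at t)"
    using QC[OF gt[of t]] by (simp add: T0_def)
  have i1: "((\<lambda>r. \<i> * complex_of_real (2 * c * r)) has_vector_derivative \<i> * complex_of_real (2 * c)) (at t)"
    apply (rule has_vector_derivative_mult_right)
    apply (rule has_vector_derivative_of_real)
    by (auto intro!: derivative_eq_intros)
  have qt: "((\<lambda>r. A *\<^sub>R QT (Zf z) (Tf z r)) has_vector_derivative A *\<^sub>R (A *\<^sub>R QTT (Zf z) T0)) (at t)"
    using has_vector_derivative_scaleR[OF DERIV_const QTc, of A] by simp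
  have Htt: "(Dt has_vector_derivative Dtt) (at t)"
    unfolding Dt_def
    apply (rule has_vector_derivative_eq_rhs)
     apply (rule has_vector_derivative_mult_right)
     apply (rule has_vector_derivative_add)
      apply (rule has_vector_derivative_mult[OF has_vector_derivative_mult[OF Et[of t] q1] i1])
     apply (rule has_vector_derivative_mult[OF Et[of t] qt])
    by (simp add: Dtt_def algebra_simps T0_def)
  have vz: "vector_derivative (\<lambda>s. v s t) (at z) = Dz"
    using Hz vector_derivative_at by blast
  have vtt: "vector_derivative (\<lambda>s. vector_derivative (\<lambda>r. v z r) (at s)) (at t) = Dtt"
    using Htt vector_derivative_at VD by metis
  have nE: "cmod (E z t) = exp (- \<alpha> / 2 * z)"
    by (simp add: E_def norm_exp_eq_Re)
  have nv: "(cmod (v z t))\<^sup>2 = K * e * (cmod (Q (Zf z) T0))\<^sup>2"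
  proof -
    have "(exp (- \<alpha> / 2 * z))\<^sup>2 = e"
      by (simp add: e_def power2_eq_square flip: exp_add)
    then show ?thesis
      using \<open>K > 0\<close> by (simp add: v_E norm_mult nE power_mult_distrib T0_def)
  qed
  have "\<i> * Dz + complex_of_real (\<beta>2 / 2) * Dtt
      - complex_of_real (\<gamma> * e * (K * e * (cmod (Q (Zf z) T0))\<^sup>2)) * v z t
      + complex_of_real (\<alpha>\<^sup>2 / (2 * \<beta>2) * t\<^sup>2) * v z t = 0"
  proof -
    define n where "n = (cmod (Q (Zf z) T0))\<^sup>2"
    have kap: "\<kappa> = - \<beta>2 * K * chi / (2 * \<gamma>)"
      using K_def \<open>\<gamma> > 0\<close> \<open>\<beta>2 \<noteq> 0\<close> \<open>chi \<noteq> 0\<close> by (simp add: field_simps)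
    have br: "\<i> * complex_of_real (- \<gamma> / chi) * QZ (Zf z) T0 + complex_of_real (\<beta>2 * K / 2) * QTT (Zf z) T0
        - complex_of_real (\<gamma> * n) * Q (Zf z) T0
      = complex_of_real (- \<gamma> / chi) * (\<i> * QZ (Zf z) T0 + complex_of_real \<kappa> * QTT (Zf z) T0
                     + complex_of_real (chi * (cmod (Q (Zf z) T0))\<^sup>2) * Q (Zf z) T0)"
      unfolding kap n_def using \<open>\<gamma> > 0\<close> \<open>chi \<noteq> 0\<close>
      by (simp add: field_simps)
    have vv: "v z t = complex_of_real (sqrt K) * E z t * Q (Zf z) T0"
      by (simp add: v_E T0_def)
    have T0e: "T0 = K * e * t" by (simp add: T0_def T_def e_def)
    show ?thesis
      unfolding vv Dz_def Dtt_def Zd_def A_def c_def scaleR_conv_of_real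
      apply (subst alg[OF \<open>\<beta>2 \<noteq> 0\<close> \<open>chi \<noteq> 0\<close> T0e])
      unfolding br[unfolded n_def] Q_eq by simp
  qed
  then show "(\<lambda>s. v s t) differentiable (at z)
         \<and> (\<forall>s. (\<lambda>r. v z r) differentiable (at s))
         \<and> (\<lambda>s. vector_derivative (\<lambda>r. v z r) (at s)) differentiable (at t)
         \<and> \<i> * vector_derivative (\<lambda>s. v s t) (at z)
             + complex_of_real (\<beta>2 / 2)
                 * vector_derivative (\<lambda>s. vector_derivative (\<lambda>r. v z r) (at s)) (at t)
             - complex_of_real (\<gamma> * exp (- \<alpha> * z) * (cmod (v z t))\<^sup>2) * v z t
             + complex_of_real (\<alpha>\<^sup>2 / (2 * \<beta>2) * t\<^sup>2) * v z t = 0"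
    using Hz Ht Htt VD unfolding vz vtt nv
    by (auto simp: differentiable_def has_vector_derivative_def e_def)
qed

end
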